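(* Let $a<0$ and $m\in(-1,0)$, and let $L_a(M,m)$ be as defined in the context. If $0<M_1<M_2$ and $\beta_+(M_j)<0$ for $j=1,2$, then $L_a(M_1,m)>L_a(M_2,m)$. Moreover $L_a(0,m)=0$ and $\lim_{M\to+\infty}L_a(M,m)=a+\ln(1-a)$.
   Context: Let $r(x)=ax/(1+x)$ for $x>-1$. For $M\ge0$, $m\in(-1,0)$ set $\alpha_+(M)=\frac{M}{r(M)}-\frac{r(M)}{2ar(m)}=\frac{1+M}{a}-\frac{M(1+m)}{2am(1+M)}$, $\beta_+(M)=\frac{M}{r(M)}+\frac{r(M)}{2ar(m)}=\frac{1+M}{a}+\frac{M(1+m)}{2am(1+M)}$, and $z_+(t)=M$ for $t\le\alpha_+$, $z_+(t)=M+\frac{ar(m)}{2}(t-\alpha_+)^2$ for $\alpha_+\le t\le\beta_+$, $z_+(t)=r(M)t$ for $\beta_+\le t\le0$. Define $L_a(M,m)=\int_{-1}^0 r(z_+(s))\,ds$. *)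

theory Defs
  imports "HOL-Analysis.Analysis"
begin

definition r :: "real \<Rightarrow> real \<Rightarrow> real" where
  "r a x = a * x / (1 + x)"

definition alpha_plus :: "real \<Rightarrow> real \<Rightarrow> real \<Rightarrow> real" where
  "alpha_plus a m M = (1 + M) / a - M * (1 + m) / (2 * a * m * (1 + M))"

definition beta_plus :: "real \<Rightarrow> real \<Rightarrow> real \<Rightarrow> real" where
  "beta_plus a m M = (1 + M) / a + M * (1 + m) / (2 * a * m * (1 + M))"

definition z_plus :: "real \<Rightarrow> real \<Rightarrow> real \<Rightarrow> real \<Rightarrow> real" where
  "z_plus a m M t =
    (if t \<le> alpha_plus a m M then M
     else if t \<le> beta_plus a m M then M + a * r a m / 2 * (t - alpha_plus a m M)^2
     else r a M * t)"

definition L :: "real \<Rightarrow> real \<Rightarrow> real \<Rightarrow> real" where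
  "L a M m = integral {-1..0} (\<lambda>s. r a (z_plus a m M s))"

end

theory Submission imports Defs "HOL-Real_Asymp.Real_Asymp" begin

definition zz :: "real \<Rightarrow> real \<Rightarrow> real \<Rightarrow> real \<Rightarrow> real" where
  "zz k T h t = (if t \<le> T - h then 2*k*h*T else if t \<le> T + h then 2*k*h*T + k/2*(t-(T-h))^2 else 2*k*h*t)"

definition GG :: "real \<Rightarrow> real \<Rightarrow> real \<Rightarrow> real \<Rightarrow> real \<Rightarrow> real" where
  "GG k T h s t = s*t - (T+h)*(s - 2*k*h) - ((s - 2*k*h)^2)/(2*k)"

lemma GG_alt: "k \<noteq> 0 \<Longrightarrow> GG k T h s t = 2*k*h*T + s*(t - T + h) - s^2/(2*k)"
  unfolding GG_def by (simp add: field_simps power2_eq_square)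

lemma zz_le_GG:
  assumes k: "k < 0" and h: "h \<ge> 0" and s: "2*k*h \<le> s" "s \<le> 0"
  shows "zz k T h t \<le> GG k T h s t"
proof (cases "t \<le> T - h")
  case True
  have "s*(t - T + h) \<ge> 0" using True s by (simp add: mult_nonpos_nonpos)
  moreover have "0 \<le> - (s^2)/(2*k)" using k by (simp add: divide_nonneg_neg)
  ultimately show ?thesis using True k by (simp add: zz_def GG_alt)
next
  case F: False
  show ?thesis
  proof (cases "t \<le> T + h")
    case True
    have "GG k T h s t - zz k T h t = - ((s - k*(t-(T-h)))^2)/(2*k)"
      using F True k by (simp add: zz_def GG_alt field_simps power2_eq_square)
    moreover have "0 \<le> - ((s - k*(t-(T-h)))^2)/(2*k)" using k by (simp add: divide_nonneg_neg)
    ultimately show ?thesis by simp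
  next
    case False
    have "GG k T h s t - zz k T h t = (s - 2*k*h)*(t - (T+h)) - ((s - 2*k*h)^2)/(2*k)"
      using F False k by (simp add: zz_def GG_def field_simps power2_eq_square)
    moreover have "(s - 2*k*h)*(t - (T+h)) \<ge> 0" using False s by simp
    moreover have "0 \<le> - ((s - 2*k*h)^2)/(2*k)" using k by (simp add: divide_nonneg_neg)
    ultimately show ?thesis by simp
  qed
qed

lemma zz_eq_GG:
  assumes k: "k < 0" and h: "h \<ge> 0"
  shows "\<exists>s. 2*k*h \<le> s \<and> s \<le> 0 \<and> zz k T h t = GG k T h s t"
proof (cases "t \<le> T - h")
  case True
  then show ?thesis using k h
    by (intro exI[of _ 0]) (simp add: zz_def GG_alt mult_nonpos_nonneg)
next
  case F: False
  show ?thesis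
  proof (cases "t \<le> T + h")
    case True
    have "2*k*h \<le> k*(t-(T-h))" using True k
      by (simp add: mult_le_cancel_left_neg)
    moreover have "k*(t-(T-h)) \<le> 0" using F k by (simp add: mult_nonpos_nonneg)
    moreover have "zz k T h t = GG k T h (k*(t-(T-h))) t"
      using F True k by (simp add: zz_def GG_alt field_simps power2_eq_square)
    ultimately show ?thesis by blast
  next
    case False
    then show ?thesis using F k h
      by (intro exI[of _ "2*k*h"]) (simp add: zz_def GG_def mult_nonpos_nonneg)
  qed
qed

lemma GG_nonneg:
  assumes k: "k < 0" and h: "h \<ge> 0" and s: "2*k*h \<le> s" "s \<le> 0" and b: "T + h \<le> 0"
  shows "GG k T h s t - s*t \<ge> 0"
proof -
  have "GG k T h s t - s*t = - (T+h)*(s - 2*k*h) - ((s - 2*k*h)^2)/(2*k)" by (simp add: GG_def algebra_simps)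
  moreover have "- (T+h)*(s - 2*k*h) \<ge> 0" using b s by simp
  moreover have "0 \<le> - ((s - 2*k*h)^2)/(2*k)" using k by (simp add: divide_nonneg_neg)
  ultimately show ?thesis by linarith
qed

lemma GG_pos:
  assumes k: "k < 0" and h: "h \<ge> 0" and s: "2*k*h < s" and b: "T + h < 0"
  shows "GG k T h s t - s*t > 0"
proof -
  have "GG k T h s t - s*t = - (T+h)*(s - 2*k*h) - ((s - 2*k*h)^2)/(2*k)" by (simp add: GG_def algebra_simps)
  moreover have "- (T+h)*(s - 2*k*h) > 0" using b s by (simp add: mult_neg_pos)
  moreover have "0 \<le> - ((s - 2*k*h)^2)/(2*k)" using k by (simp add: divide_nonneg_neg)
  ultimately show ?thesis by linarith
qed

lemma zz_nonneg:
  assumes k: "k < 0" and h: "h \<ge> 0" and b: "T + h \<le> 0" and t: "t \<le> 0"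
  shows "zz k T h t \<ge> 0"
proof -
  obtain s where s: "2*k*h \<le> s" "s \<le> 0" "zz k T h t = GG k T h s t" using zz_eq_GG[OF k h] by blast
  have "s*t \<ge> 0" using s t by (simp add: mult_nonpos_nonpos)
  then show ?thesis using GG_nonneg[OF k h s(1,2) b, of t] s(3) by linarith
qed

lemma zz_less:
  assumes k: "k < 0" and h1: "h1 > 0" and h2: "h2 > 0" and rho: "2*k*h2 < 2*k*h1"
    and M: "2*k*h1*T1 < 2*k*h2*T2" and b: "T2 + h2 < 0" and t: "t < 0"
  shows "zz k T1 h1 t < zz k T2 h2 t"
proof -
  obtain s where s: "2*k*h2 \<le> s" "s \<le> 0" "zz k T2 h2 t = GG k T2 h2 s t" using zz_eq_GG[OF k, of h2] h2 by force
  show ?thesis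
  proof (cases "s < 2*k*h1")
    case True
    have "zz k T1 h1 t \<le> GG k T1 h1 (2*k*h1) t" using h1 k
      by (intro zz_le_GG) (auto simp: mult_nonpos_nonneg)
    also have "\<dots> = 2*k*h1*t" by (simp add: GG_def)
    also have "\<dots> < s * t" using True t by (simp add: mult_less_cancel_right)
    also have "\<dots> \<le> zz k T2 h2 t" using GG_nonneg[OF k _ s(1,2) _, of T2 t] h2 b s(3) by linarith
    finally show ?thesis .
  next
    case False
    define D where "D x = GG k T2 h2 x t - GG k T1 h1 x t" for x
    have D0: "D 0 > 0" using M k by (simp add: D_def GG_alt)
    have "D (2*k*h1) = GG k T2 h2 (2*k*h1) t - (2*k*h1) * t" by (simp add: D_def GG_def)
    hence D1: "D (2*k*h1) > 0" using GG_pos[OF k _ rho b, of t] h2 by linarith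
    have lin: "D s * (2*k*h1) = (2*k*h1 - s) * D 0 + s * D (2*k*h1)"
      using k by (simp add: D_def GG_alt field_simps power2_eq_square)
    have kh1: "2*k*h1 < 0" using k h1 by (simp add: mult_neg_pos)
    have "(2*k*h1 - s) * D 0 \<le> 0" using False D0 by (simp add: mult_nonpos_nonneg)
    moreover have "s * D (2*k*h1) \<le> 0" using s D1 by (simp add: mult_nonpos_nonneg)
    moreover have "\<not> ((2*k*h1 - s) * D 0 = 0 \<and> s * D (2*k*h1) = 0)"
      using D0 D1 kh1 by auto
    ultimately have "D s * (2*k*h1) < 0" using lin by linarith
    moreover have "D s \<le> 0 \<Longrightarrow> D s * (2*k*h1) \<ge> 0" using kh1 by (simp add: mult_nonpos_nonpos)
    ultimately have "D s > 0" by linarith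
    moreover have "zz k T1 h1 t \<le> GG k T1 h1 s t" using zz_le_GG[OF k _ _ s(2)] h1 False by simp
    ultimately show ?thesis using s(3) by (simp add: D_def)
  qed
qed


lemma zz_cont: assumes h0: "h \<ge> 0" shows "continuous_on UNIV (zz k T h)"
proof -
  have c2: "continuous_on UNIV (\<lambda>t. if t \<le> T + h then 2*k*h*T + k/2*(t-(T-h))^2 else 2*k*h*t)"
  proof -
    have "continuous_on ({..T+h} \<union> {T+h..}) (\<lambda>t. if t \<le> T + h then 2*k*h*T + k/2*(t-(T-h))^2 else 2*k*h*t)"
      by (rule continuous_on_cases) (auto intro!: continuous_intros simp: power2_eq_square field_simps)
    moreover have "{..T+h} \<union> {T+h..} = (UNIV::real set)" by auto
    ultimately show ?thesis by simp
  qed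
  have "continuous_on ({..T-h} \<union> {T-h..}) (\<lambda>t. if t \<le> T - h then 2*k*h*T else
          (if t \<le> T + h then 2*k*h*T + k/2*(t-(T-h))^2 else 2*k*h*t))"
    apply (rule continuous_on_cases)
        apply (auto intro!: continuous_intros intro: continuous_on_subset[OF c2] simp: power2_eq_square h0)
    done
  moreover have "{..T-h} \<union> {T-h..} = (UNIV::real set)" by auto
  ultimately show ?thesis unfolding zz_def[abs_def] by simp
qed

lemma z_plus_zz:
  assumes a: "a < 0" and m: "-1 < m" "m < 0" and M: "M \<ge> 0"
  shows "z_plus a m M t = zz (a * r a m) ((1+M)/a) (M*(1+m)/(2*a*m*(1+M))) t"
proof -
  have nz: "1 + m \<noteq> 0" "1 + M \<noteq> 0" "a \<noteq> 0" "m \<noteq> 0" using a m M by auto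
  have "2 * (a * r a m) * (M*(1+m)/(2*a*m*(1+M))) = r a M"
    using nz unfolding r_def by (simp add: divide_simps)
  moreover have "r a M * ((1+M)/a) = M" using nz unfolding r_def by (simp add: divide_simps)
  ultimately show ?thesis
    by (simp add: z_plus_def zz_def alpha_plus_def beta_plus_def algebra_simps)
qed


lemma kh_eq:
  assumes a: "a < 0" and m: "-1 < m" "m < 0" and M: "M \<ge> 0"
  shows "2 * (a * r a m) * (M*(1+m)/(2*a*m*(1+M))) = r a M"
    and "r a M * ((1+M)/a) = M"
    and "(1+M)/a + M*(1+m)/(2*a*m*(1+M)) = beta_plus a m M"
proof -
  have nz: "1 + m \<noteq> 0" "1 + M \<noteq> 0" "a \<noteq> 0" "m \<noteq> 0" using a m M by auto
  show "2 * (a * r a m) * (M*(1+m)/(2*a*m*(1+M))) = r a M"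
    using nz unfolding r_def by (simp add: divide_simps)
  show "r a M * ((1+M)/a) = M" using nz unfolding r_def by (simp add: divide_simps)
  show "(1+M)/a + M*(1+m)/(2*a*m*(1+M)) = beta_plus a m M" by (simp add: beta_plus_def)
qed

lemma r_anti:
  fixes a x y :: real
  assumes a: "a < 0" and x: "0 \<le> x" and xy: "x < y"
  shows "r a y < r a x"
proof -
  have "x/(1+x) < y/(1+y)" using x xy by (simp add: divide_simps algebra_simps)
  hence "a * (y/(1+y)) < a * (x/(1+x))" by (rule mult_strict_left_mono_neg[OF _ a])
  thus ?thesis by (simp add: r_def)
qed

lemma h_pos:
  fixes a m M :: real
  assumes a: "a < 0" and m: "-1 < m" "m < 0" and M: "M > 0"
  shows "M*(1+m)/(2*a*m*(1+M)) > 0"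
proof -
  have "a*m > 0" using a m by (intro mult_neg_neg) auto
  hence "2*a*m*(1+M) > 0" using M by simp
  moreover have "M*(1+m) > 0" using M m by simp
  ultimately show ?thesis by simp
qed

lemma k_neg:
  assumes a: "a < 0" and m: "-1 < m" "m < 0"
  shows "a * r a m < 0"
proof -
  have "a*m > 0" using a m by (intro mult_neg_neg) auto
  hence "r a m > 0" using m by (simp add: r_def)
  thus ?thesis using a by (simp add: mult_neg_pos)
qed

lemma L_zz:
  assumes a: "a < 0" and m: "-1 < m" "m < 0" and M: "M \<ge> 0"
  shows "L a M m = integral {-1..0} (\<lambda>s. r a (zz (a * r a m) ((1+M)/a) (M*(1+m)/(2*a*m*(1+M))) s))"
  unfolding L_def using z_plus_zz[OF a m M] by simp

lemma cont_rzz: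
  assumes k: "k < 0" and h: "h \<ge> 0" and b: "T + h \<le> 0"
  shows "continuous_on {-1..0} (\<lambda>s. r a (zz k T h s))"
proof -
  have c: "continuous_on {-1..0} (zz k T h)" using zz_cont[OF h] continuous_on_subset by blast
  have nz: "\<forall>s\<in>{-1..0}. 1 + zz k T h s \<noteq> 0" 
  proof
    fix s :: real assume "s \<in> {-1..0}"
    hence "zz k T h s \<ge> 0" using zz_nonneg[OF k h b] by simp
    thus "1 + zz k T h s \<noteq> 0" by linarith
  qed
  have "continuous_on {-1..0} (\<lambda>s. a * zz k T h s / (1 + zz k T h s))"
    by (rule continuous_on_divide) (auto intro!: continuous_intros c nz)
  thus ?thesis by (simp add: r_def)
qed

lemma mono_part:
  assumes a: "a < 0" and m: "-1 < m" "m < 0" and M: "0 < M1" "M1 < M2"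
    and b: "beta_plus a m M1 < 0" "beta_plus a m M2 < 0"
  shows "L a M1 m > L a M2 m"
proof -
  define k where "k = a * r a m"
  define T1 where "T1 = (1+M1)/a"
  define T2 where "T2 = (1+M2)/a"
  define h1 where "h1 = M1*(1+m)/(2*a*m*(1+M1))"
  define h2 where "h2 = M2*(1+m)/(2*a*m*(1+M2))"
  have k: "k < 0" using k_neg[OF a m] by (simp add: k_def)
  have h1: "h1 > 0" using h_pos[OF a m, of M1] M by (simp add: h1_def)
  have h2: "h2 > 0" using h_pos[OF a m, of M2] M by (simp add: h2_def)
  have e1: "2*k*h1 = r a M1" "2*k*h1*T1 = M1" "T1 + h1 = beta_plus a m M1"
    using kh_eq[OF a m, of M1] M unfolding k_def T1_def h1_def by auto
  have e2: "2*k*h2 = r a M2" "2*k*h2*T2 = M2" "T2 + h2 = beta_plus a m M2"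
    using kh_eq[OF a m, of M2] M unfolding k_def T2_def h2_def by auto
  have rho: "2*k*h2 < 2*k*h1" using e1 e2 r_anti[OF a, of M1 M2] M by simp
  have Mlt: "2*k*h1*T1 < 2*k*h2*T2" using e1 e2 M by simp
  have L1: "L a M1 m = integral {-1..0} (\<lambda>s. r a (zz k T1 h1 s))"
    using L_zz[OF a m, of M1] M unfolding k_def T1_def h1_def by simp
  have L2: "L a M2 m = integral {-1..0} (\<lambda>s. r a (zz k T2 h2 s))"
    using L_zz[OF a m, of M2] M unfolding k_def T2_def h2_def by simp
  have "integral {-1..0} (\<lambda>s. r a (zz k T2 h2 s)) < integral {-1..0} (\<lambda>s. r a (zz k T1 h1 s))"
  proof (rule integral_less_real)
    show "continuous_on {-1..0} (\<lambda>s. r a (zz k T2 h2 s))"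
      using cont_rzz[OF k] h2 e2 b by simp
    show "continuous_on {-1..0} (\<lambda>s. r a (zz k T1 h1 s))"
      using cont_rzz[OF k] h1 e1 b by simp
    show "{-1<..<0::real} \<noteq> {}" by (auto intro: exI[of _ "-1/2"])
    fix x :: real assume x: "x \<in> {-1<..<0}"
    have "zz k T1 h1 x < zz k T2 h2 x"
      using zz_less[OF k h1 h2 rho Mlt] e2 b x by simp
    moreover have "0 \<le> zz k T1 h1 x" using zz_nonneg[OF k] h1 e1 b x by simp
    ultimately show "r a (zz k T2 h2 x) < r a (zz k T1 h1 x)" using r_anti[OF a] by blast
  qed
  thus ?thesis using L1 L2 by simp
qed


lemma L_zero:
  fixes a m :: real
  assumes a: "a < 0" and m: "-1 < m" "m < 0"
  shows "L a 0 m = 0"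
proof -
  have "L a 0 m = integral {-1..0} (\<lambda>s. r a (zz (a * r a m) ((1+0)/a) (0*(1+m)/(2*a*m*(1+0))) s))"
    using L_zz[OF a m, of 0] by simp
  also have "\<dots> = integral {-1..0} (\<lambda>s. 0::real)"
  proof -
    have z0: "zz k T 0 s = 0" for k T s by (simp add: zz_def)
    show ?thesis by (simp add: z0 r_def)
  qed
  finally show ?thesis by simp
qed

lemma L_large:
  fixes a m M :: real
  assumes a: "a < 0" and m: "-1 < m" "m < 0" and M: "M > - a * (1 + (1+m)/(2*a*m))"
  shows "L a M m = a + a * ln (1 - r a M) / r a M"
proof -
  define C where "C = (1+m)/(2*a*m)"
  define k where "k = a * r a m"
  define T where "T = (1+M)/a"
  define h where "h = M*(1+m)/(2*a*m*(1+M))"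
  define c where "c = r a M"
  have am: "a*m > 0" using a m by (intro mult_neg_neg) auto
  have C: "C > 0" using am m by (simp add: C_def)
  have "-a*(1+C) > 0" using a C by (intro mult_pos_pos) auto
  hence M0: "M > 0" using M unfolding C_def[symmetric] by linarith
  have hC: "h \<le> C"
  proof -
    have "h = (M/(1+M)) * C" by (simp add: h_def C_def)
    moreover have "M/(1+M) \<le> 1" using M0 by simp
    ultimately show ?thesis using C M0 by (simp add: divide_le_eq algebra_simps)
  qed
  have "- a * (1 + C) < 1 + M" using M unfolding C_def by simp
  hence T: "T < - (1 + C)" unfolding T_def by (subst neg_divide_less_eq[OF a]) (simp add: algebra_simps)
  have b: "T + h < -1" using T hC by simp
  have k: "k < 0" using k_neg[OF a m] by (simp add: k_def)
  have e: "2*k*h = c" using kh_eq[OF a m, of M] M0 unfolding k_def h_def c_def by simp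
  have rho: "c < 0" using r_anti[OF a, of 0 M] M0 by (simp add: c_def r_def)
  have "L a M m = integral {-1..0} (\<lambda>s. r a (zz k T h s))"
    using L_zz[OF a m, of M] M0 unfolding k_def T_def h_def by simp
  also have "\<dots> = integral {-1..0} (\<lambda>s. a * c * s / (1 + c * s))"
    by (rule Henstock_Kurzweil_Integration.integral_cong) (use b e h_pos[OF a m M0] in \<open>auto simp: zz_def r_def h_def\<close>)
  also have "\<dots> = a + a * ln (1 - c) / c"
  proof -
    define Phi where "Phi s = a * s - a*ln(1+c * s)/c" for s
    have "((\<lambda>s. a * c * s / (1 + c * s)) has_integral (Phi 0 - Phi (-1))) {-1..0}"
    proof (rule fundamental_theorem_of_calculus)
      show "-1 \<le> (0::real)" by simp
      fix x :: real assume x: "x \<in> {-1..0}"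
      have pos: "1 + c * x > 0" using x rho by (simp add: mult_nonpos_nonpos add_pos_nonneg)
      have d1: "((\<lambda>z. 1 + c * z) has_real_derivative c) (at x)"
        by (auto intro!: derivative_eq_intros)
      have d2: "((\<lambda>z. ln (1 + c * z)) has_real_derivative inverse (1 + c * x) * c) (at x)"
        by (rule DERIV_chain2[OF DERIV_ln[OF pos] d1])
      have d3: "((\<lambda>z. a * ln (1 + c * z) / c) has_real_derivative a * (inverse (1 + c * x) * c) / c) (at x)"
        by (intro DERIV_cdivide DERIV_cmult d2)
      have d4: "((\<lambda>z. a * z) has_real_derivative a * 1) (at x)"
        by (intro DERIV_cmult DERIV_ident)
      have "(Phi has_real_derivative (a * 1 - a * (inverse (1 + c * x) * c) / c)) (at x)"
        unfolding Phi_def[abs_def] by (rule DERIV_diff[OF d4 d3])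
      moreover have "a * 1 - a * (inverse (1 + c * x) * c) / c = a*c * x/(1+c * x)"
      proof -
        have n1: "1 + c * x \<noteq> 0" "c \<noteq> 0" using pos rho by auto
        have "a * 1 - a * (inverse (1 + c * x) * c) / c = a - a / (1 + c * x)"
        proof -
          have "a * (inverse (1 + c * x) * c) / c = a * inverse (1 + c * x)"
            using n1 by simp
          thus ?thesis by (simp add: divide_inverse)
        qed
        also have "\<dots> = a*c * x/(1+c * x)" using n1 by (simp add: divide_simps) (simp add: algebra_simps)
        finally show ?thesis .
      qed
      ultimately have "(Phi has_real_derivative (a*c * x/(1+c * x))) (at x)" by simp
      thus "(Phi has_vector_derivative (a*c * x/(1+c * x))) (at x within {-1..0})"
        using has_real_derivative_iff_has_vector_derivative has_vector_derivative_at_within by blast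
    qed
    moreover have "Phi 0 - Phi (-1) = a + a * ln (1 - c) / c" by (simp add: Phi_def)
    ultimately show ?thesis by (simp add: integral_unique)
  qed
  finally show ?thesis by (simp add: c_def)
qed

lemma lim_part:
  fixes a m :: real
  assumes a: "a < 0" and m: "-1 < m" "m < 0"
  shows "((\<lambda>M. L a M m) \<longlongrightarrow> a + ln (1 - a)) at_top"
proof -
  have "((\<lambda>M::real. M/(1+M)) \<longlongrightarrow> 1) at_top" by real_asymp
  hence "((\<lambda>M. a * (M/(1+M))) \<longlongrightarrow> a * 1) at_top" by (rule tendsto_mult_left)
  hence r: "((\<lambda>M. r a M) \<longlongrightarrow> a) at_top" by (simp add: r_def)
  have "((\<lambda>M. a + a * ln (1 - r a M) / r a M) \<longlongrightarrow> a + a * ln (1 - a) / a) at_top"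
    using a by (intro tendsto_intros r) auto
  hence lim: "((\<lambda>M. a + a * ln (1 - r a M) / r a M) \<longlongrightarrow> a + ln (1 - a)) at_top"
    using a by simp
  have ev: "eventually (\<lambda>M. a + a * ln (1 - r a M) / r a M = L a M m) at_top"
    using eventually_gt_at_top[of "- a * (1 + (1+m)/(2*a*m))"]
    by eventually_elim (use L_large[OF a m] in simp)
  show ?thesis using tendsto_cong[OF ev] lim by simp
qed

theorem lemma3p12:
  fixes a m :: real
  assumes "a < 0" and "-1 < m" and "m < 0"
  shows "(\<forall>M1 M2. 0 < M1 \<and> M1 < M2 \<and> beta_plus a m M1 < 0 \<and> beta_plus a m M2 < 0
            \<longrightarrow> L a M1 m > L a M2 m)
         \<and> L a 0 m = 0
         \<and> ((\<lambda>M. L a M m) \<longlongrightarrow> a + ln (1 - a)) at_top"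
  using mono_part[OF assms] L_zero[OF assms] lim_part[OF assms] by blast

end
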